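(* Let $N,h\in\mathbb{N}$, let $\mathcal{T}$ be an $(N,h)$-regular rooted tree, let $\mathcal{S}\subset\mathcal{T}$ be a subtree, and let $1\le m\le N$ be an integer. Suppose that for every $(m,h)$-regular subtree $\mathcal{R}$ of $\mathcal{T}$, $\mathcal{S}_h\cap\mathcal{R}_h\neq\emptyset$. Then $\mathcal{S}$ has an $(N-m+1,h)$-regular subtree.
   Context: A rooted tree is a connected graph without cycles with a distinguished vertex (the root), identified with its vertex set. The height of a vertex is the length of the unique path from the root; for a rooted tree $\mathcal{T}$, $\mathcal{T}_n$ denotes the set of vertices of height $n$. A successor of a vertex $\tau'$ is a vertex adjacent to $\tau'$ of height one greater. A subtree of $\mathcal{T}$ means a subset of vertices containing the root and closed under taking predecessors. A finite rooted tree is $(N,h)$-regular if it has no vertices of height $h+1$ and every vertex of height less than $h$ has exactly $N$ successors. *)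

theory Defs
  imports Main
begin

definition rooted_tree :: "'a set \<Rightarrow> 'a \<Rightarrow> ('a \<Rightarrow> 'a) \<Rightarrow> bool" where
  "rooted_tree V r p \<longleftrightarrow> r \<in> V \<and> (\<forall>v\<in>V. v \<noteq> r \<longrightarrow> p v \<in> V)
     \<and> (\<forall>v\<in>V. \<exists>n. (p ^^ n) v = r)"

definition hgt :: "'a \<Rightarrow> ('a \<Rightarrow> 'a) \<Rightarrow> 'a \<Rightarrow> nat" where
  "hgt r p v = (LEAST n. (p ^^ n) v = r)"

definition level :: "'a set \<Rightarrow> 'a \<Rightarrow> ('a \<Rightarrow> 'a) \<Rightarrow> nat \<Rightarrow> 'a set" where
  "level V r p n = {v \<in> V. hgt r p v = n}"

definition succs :: "'a set \<Rightarrow> 'a \<Rightarrow> ('a \<Rightarrow> 'a) \<Rightarrow> 'a \<Rightarrow> 'a set" where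
  "succs V r p v = {w \<in> V. w \<noteq> r \<and> p w = v}"

definition subtree :: "'a set \<Rightarrow> 'a \<Rightarrow> ('a \<Rightarrow> 'a) \<Rightarrow> 'a set \<Rightarrow> bool" where
  "subtree V r p S \<longleftrightarrow> S \<subseteq> V \<and> r \<in> S \<and> (\<forall>v\<in>S. v \<noteq> r \<longrightarrow> p v \<in> S)"

definition regular :: "nat \<Rightarrow> nat \<Rightarrow> 'a set \<Rightarrow> 'a \<Rightarrow> ('a \<Rightarrow> 'a) \<Rightarrow> bool" where
  "regular N h V r p \<longleftrightarrow> finite V \<and> level V r p (h + 1) = {}
     \<and> (\<forall>v\<in>V. hgt r p v < h \<longrightarrow> card (succs V r p v) = N)"

end

theory Submission
  imports Defs
begin

inductive_set reach :: "'a \<Rightarrow> ('a \<Rightarrow> 'a set) \<Rightarrow> 'a set" for r sel where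
  base: "r \<in> reach r sel"
| step: "v \<in> reach r sel \<Longrightarrow> w \<in> sel v \<Longrightarrow> w \<in> reach r sel"

lemma generic:
  assumes V: "regular N h V r p" and rV: "r \<in> V"
    and Pr: "P r"
    and ch: "\<forall>v\<in>V. P v \<and> hgt r p v < h \<longrightarrow> k \<le> card {w \<in> succs V r p v. P w}"
  shows "\<exists>Q. subtree V r p Q \<and> regular k h Q r p \<and> (\<forall>v\<in>Q. P v)"
proof -
  have finV: "finite V" and lv: "level V r p (h+1) = {}" using V by (auto simp: regular_def)
  define sel where "sel v = (if v \<in> V \<and> P v \<and> hgt r p v < h
     then (SOME A. A \<subseteq> {w \<in> succs V r p v. P w} \<and> card A = k) else {})" for v
  have ex: "\<exists>A. A \<subseteq> {w \<in> succs V r p v. P w} \<and> card A = k"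
    if "v \<in> V \<and> P v \<and> hgt r p v < h" for v
  proof -
    have "k \<le> card {w \<in> succs V r p v. P w}" using ch that by blast
    from obtain_subset_with_card_n[OF this] show ?thesis by blast
  qed
  have selc: "sel v \<subseteq> {w \<in> succs V r p v. P w} \<and> card (sel v) = k"
    if "v \<in> V \<and> P v \<and> hgt r p v < h" for v
  proof -
    have "sel v = (SOME A. A \<subseteq> {w \<in> succs V r p v. P w} \<and> card A = k)"
      using that by (simp add: sel_def)
    then show ?thesis using someI_ex[OF ex[OF that]] by simp
  qed
  have sel1: "sel v \<subseteq> {w \<in> succs V r p v. P w}" for v
    using selc[of v] by (cases "v \<in> V \<and> P v \<and> hgt r p v < h") (auto simp: sel_def)
  have sel2: "v \<in> V \<Longrightarrow> P v \<Longrightarrow> hgt r p v < h \<Longrightarrow> card (sel v) = k" for v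
    using selc by blast
  define Q where "Q = reach r sel"
  have QV: "\<forall>v\<in>Q. v \<in> V \<and> P v"
  proof
    fix v assume "v \<in> Q" then show "v \<in> V \<and> P v" unfolding Q_def
      by (induction rule: reach.induct) (use rV Pr sel1 in \<open>auto simp: succs_def\<close>)
  qed
  have cl: "\<forall>v\<in>Q. v \<noteq> r \<longrightarrow> p v \<in> Q"
  proof
    fix v assume "v \<in> Q" then show "v \<noteq> r \<longrightarrow> p v \<in> Q" unfolding Q_def
    proof (induction rule: reach.induct)
      case base then show ?case by simp
    next
      case (step v w) then show ?case using sel1[of v] by (auto simp: succs_def)
    qed
  qed
  have sc: "succs Q r p v = sel v" if "v \<in> Q" for v
  proof
    show "sel v \<subseteq> succs Q r p v"
      using sel1[of v] that reach.step[of v r sel] unfolding Q_def by (auto simp: succs_def)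
  next
    show "succs Q r p v \<subseteq> sel v"
    proof
      fix w assume "w \<in> succs Q r p v"
      then have w: "w \<in> Q" "w \<noteq> r" "p w = v" by (auto simp: succs_def)
      from w(1) obtain v' where "v' \<in> Q" "w \<in> sel v'" unfolding Q_def
        using w(2) by (cases rule: reach.cases) (auto simp: Q_def)
      then show "w \<in> sel v" using sel1[of v'] w(3) by (auto simp: succs_def)
    qed
  qed
  have "subtree V r p Q" using QV cl unfolding subtree_def Q_def by (auto intro: reach.base)
  moreover have "regular k h Q r p"
    unfolding regular_def
  proof (intro conjI ballI impI)
    show "finite Q" using QV finV by (meson finite_subset subsetI)
    show "level Q r p (h + 1) = {}" using QV lv by (auto simp: level_def)
    fix v assume "v \<in> Q" "hgt r p v < h"
    then show "card (succs Q r p v) = k" using sc sel2 QV by auto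
  qed
  ultimately show ?thesis using QV by blast
qed

lemma hgt_step:
  assumes "rooted_tree V r p" "w \<in> V" "w \<noteq> r"
  shows "hgt r p w = Suc (hgt r p (p w))"
proof -
  have pw: "p w \<in> V" using assms by (auto simp: rooted_tree_def)
  then obtain n where n: "(p ^^ n) (p w) = r" using assms by (auto simp: rooted_tree_def)
  have e0: "(p ^^ hgt r p (p w)) (p w) = r" unfolding hgt_def by (rule LeastI[of _ n]) (rule n)
  have "(p ^^ Suc (hgt r p (p w))) w = r" using e0 by (simp add: funpow_Suc_right del: funpow.simps)
  then have le: "hgt r p w \<le> Suc (hgt r p (p w))" unfolding hgt_def by (rule Least_le)
  have ew: "(p ^^ hgt r p w) w = r" unfolding hgt_def
    by (rule LeastI[of _ "Suc n"]) (simp add: funpow_Suc_right n del: funpow.simps)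
  then obtain k where k: "hgt r p w = Suc k" using assms(3) by (cases "hgt r p w") auto
  then have "(p ^^ k) (p w) = r" using ew by (simp add: funpow_Suc_right del: funpow.simps)
  then have "hgt r p (p w) \<le> k" unfolding hgt_def by (rule Least_le)
  then show ?thesis using le k by simp
qed

primrec good :: "'a set \<Rightarrow> 'a set \<Rightarrow> 'a \<Rightarrow> ('a \<Rightarrow> 'a) \<Rightarrow> nat \<Rightarrow> nat \<Rightarrow> 'a \<Rightarrow> bool" where
  "good S V r p k 0 v = (v \<in> S)"
| "good S V r p k (Suc d) v = (v \<in> S \<and> k \<le> card {w \<in> succs V r p v. good S V r p k d w})"

lemma good_S: "good S V r p k d v \<Longrightarrow> v \<in> S"
  by (cases d) auto

theorem lemma2p2:
  fixes V S :: "'a set" and r :: 'a and p :: "'a \<Rightarrow> 'a" and N h m :: nat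
  assumes "rooted_tree V r p"
    and "regular N h V r p"
    and "subtree V r p S"
    and "1 \<le> m" and "m \<le> N"
    and "\<forall>R. subtree V r p R \<and> regular m h R r p \<longrightarrow> level S r p h \<inter> level R r p h \<noteq> {}"
  shows "\<exists>Q. subtree S r p Q \<and> regular (N - m + 1) h Q r p"
proof -
  have rV: "r \<in> V" using assms(1) by (simp add: rooted_tree_def)
  have finV: "finite V" using assms(2) by (simp add: regular_def)
  define G where "G v = good S V r p (N - m + 1) (h - hgt r p v) v" for v
  have chs: "hgt r p w = Suc (hgt r p v)" if "w \<in> succs V r p v" for v w
  proof -
    have w: "w \<in> V" "w \<noteq> r" "p w = v" using that by (auto simp: succs_def)
    show ?thesis using hgt_step[OF assms(1) w(1) w(2)] w(3) by simp
  qed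
  have Gsucc: "G v = (v \<in> S \<and> N - m + 1 \<le> card {w \<in> succs V r p v. G w})"
    if hv: "hgt r p v < h" for v
  proof -
    obtain d where d: "h - hgt r p v = Suc d" 
    proof -
      have "0 < h - hgt r p v" using hv by simp
      then show ?thesis using that gr0_conv_Suc by blast
    qed
    have "{w \<in> succs V r p v. G w} = {w \<in> succs V r p v. good S V r p (N - m + 1) d w}"
    proof (rule Collect_cong)
      fix w
      show "(w \<in> succs V r p v \<and> G w) = (w \<in> succs V r p v \<and> good S V r p (N - m + 1) d w)"
      proof (cases "w \<in> succs V r p v")
        case True
        then have "h - hgt r p w = d" using chs[OF True] d by simp
        then show ?thesis using True unfolding G_def by simp
      qed simp
    qed
    then show ?thesis using d by (simp add: G_def)
  qed
  show ?thesis
  proof (cases "G r")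
    case True
    have "\<forall>v\<in>V. G v \<and> hgt r p v < h \<longrightarrow> N - m + 1 \<le> card {w \<in> succs V r p v. G w}"
      using Gsucc by blast
    then obtain Q where Q: "subtree V r p Q" "regular (N - m + 1) h Q r p" "\<forall>v\<in>Q. G v"
      using generic[where P=G, OF assms(2) rV True] by blast
    have "Q \<subseteq> S"
    proof
      fix v assume "v \<in> Q"
      then have "G v" using Q(3) by blast
      then show "v \<in> S" unfolding G_def by (rule good_S)
    qed
    then have "subtree S r p Q" using Q(1) by (auto simp: subtree_def)
    then show ?thesis using Q(2) by blast
  next
    case False
    have "\<forall>v\<in>V. \<not> G v \<and> hgt r p v < h \<longrightarrow> m \<le> card {w \<in> succs V r p v. \<not> G w}"
    proof (intro ballI impI)
      fix v assume v: "v \<in> V" "\<not> G v \<and> hgt r p v < h"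
      have cN: "card (succs V r p v) = N" using assms(2) v by (auto simp: regular_def)
      have fin: "finite (succs V r p v)" using finV by (simp add: succs_def)
      have split: "card {w \<in> succs V r p v. G w} + card {w \<in> succs V r p v. \<not> G w} = N"
      proof -
        have "{w \<in> succs V r p v. G w} \<union> {w \<in> succs V r p v. \<not> G w} = succs V r p v" by blast
        moreover have "card ({w \<in> succs V r p v. G w} \<union> {w \<in> succs V r p v. \<not> G w})
           = card {w \<in> succs V r p v. G w} + card {w \<in> succs V r p v. \<not> G w}"
          by (rule card_Un_disjoint) (use fin in auto)
        ultimately show ?thesis using cN by simp
      qed
      show "m \<le> card {w \<in> succs V r p v. \<not> G w}"
      proof (cases "v \<in> S")
        case True
        then have "\<not> N - m + 1 \<le> card {w \<in> succs V r p v. G w}" using Gsucc v by blast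
        then show ?thesis using split assms(5) by linarith
      next
        case False
        have "{w \<in> succs V r p v. G w} = {}"
        proof (rule ccontr)
          assume "{w \<in> succs V r p v. G w} \<noteq> {}"
          then obtain w where "w \<in> succs V r p v" "G w" by blast
          then have "w \<in> S" "w \<noteq> r" "p w = v" unfolding G_def
            by (auto simp: succs_def dest: good_S)
          then show False using False assms(3) by (auto simp: subtree_def)
        qed
        then have "card {w \<in> succs V r p v. G w} = 0" by (metis card.empty)
        then show ?thesis using split assms(5) by linarith
      qed
    qed
    then obtain R where R: "subtree V r p R" "regular m h R r p" "\<forall>v\<in>R. \<not> G v"
      using generic[where P="\<lambda>v. \<not> G v" and k=m, OF assms(2) rV] False by blast
    have "level S r p h \<inter> level R r p h \<noteq> {}" using assms(6) R(1,2) by blast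
    then obtain x where x: "x \<in> level S r p h" "x \<in> level R r p h" by blast
    then have "G x" by (simp add: level_def G_def)
    then show ?thesis using x R(3) by (simp add: level_def)
  qed
qed

end
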